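(* Let $\nu$ be a sub-Gaussian probability measure on $\mathbb{R}$ and $c_1,C>0$ constants such that a vector $X\in\mathbb{R}^d$ with i.i.d. entries from $\nu$ satisfies $\mathbb{P}(\|X\|\ge\sqrt d+t)\le Ce^{-c_1t^2}$ for $t\ge0$. Let $X_1,X_2,\dots$ be i.i.d. such vectors with law $\mu$, and $\mu_n=\frac1n\sum_{i=1}^n\delta_{X_i}$. Let $\delta>0$ with $c_1\delta^2>8$. Then almost surely \[ \sup_{\sigma\in[\delta,\sqrt n],\ i=1,\dots,n}\Big|\log\Big(\int f_\sigma(X_i,x')\,d\mu_n(x')\Big)-\log\Big(\int f_\sigma(X_i,x')\,d\mu(x')\Big)\Big|=O\big(n^{4/(c_1\delta^2)-1/2}\sqrt{\log n}\big). \]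
   Context: $f_\sigma(x,x')=\exp(-\|x-x'\|^2/2\sigma^2)$. *)

theory Defs
  imports "HOL-Probability.Probability"
begin

definition subgaussian :: "real measure \<Rightarrow> bool" where
  "subgaussian \<nu> \<longleftrightarrow>
     (\<exists>K>0. \<forall>t\<ge>0. measure \<nu> {x\<in>space \<nu>. \<bar>x\<bar> \<ge> t} \<le> 2 * exp (- (t^2) / K^2))"

definition iid_vec_law :: "real measure \<Rightarrow> (real ^ 'd) measure" where
  "iid_vec_law \<nu> = distr (PiM UNIV (\<lambda>_::'d. \<nu>)) borel (\<lambda>f. vec_lambda f)"

definition gauss_kernel :: "real \<Rightarrow> 'a::real_normed_vector \<Rightarrow> 'a \<Rightarrow> real" where
  "gauss_kernel \<sigma> x x' = exp (- ((norm (x - x'))\<^sup>2) / (2 * \<sigma>\<^sup>2))"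

end

theory Submission imports Defs begin

lemma exp_diff_le:
  fixes a b :: real
  assumes "0 \<le> a" "a \<le> b"
  shows "\<bar>exp (-a) - exp (-b)\<bar> \<le> (b - a) * exp (-a)"
proof -
  have "exp (-(b-a)) \<ge> 1 - (b-a)" using exp_ge_add_one_self[of "-(b-a)"] by linarith
  hence "exp (-a) * (1 - (b-a)) \<le> exp (-a) * exp (-(b-a))" by (intro mult_left_mono) auto
  also have "exp (-a) * exp (-(b-a)) = exp (-b)" by (simp add: exp_add[symmetric])
  finally have "exp (-a) - exp (-b) \<le> exp (-a) * (b - a)" by (simp add: algebra_simps)
  moreover have "exp (-b) \<le> exp (-a)" using assms by simp
  ultimately show ?thesis by (simp add: mult.commute)
qed

lemma v_exp_le: "(v::real) * exp (-(v^2)/2) \<le> 1"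
proof -
  have e: "(v - 1)^2 = v^2 - 2 * v + 1" by (simp add: power2_diff)
  have "0 \<le> (v - 1)^2" by simp
  hence "v \<le> 1 + v^2/2" using e by linarith
  also have "\<dots> \<le> exp (v^2/2)" using exp_ge_add_one_self by simp
  finally have "v \<le> exp (v^2/2)" .
  thus ?thesis by (simp add: exp_minus field_simps)
qed

lemma w_exp_le: "(w::real) * exp (-w) \<le> 1"
proof -
  have "w \<le> exp w" using exp_ge_add_one_self[of w] by linarith
  thus ?thesis by (simp add: exp_minus field_simps)
qed

lemma aux_x:
  fixes \<sigma> u u' h :: real
  assumes "\<sigma> > 0" "0 \<le> u" "u \<le> u'" "u' \<le> u + h"
  shows "\<bar>exp (-(u^2)/(2*\<sigma>^2)) - exp (-(u'^2)/(2*\<sigma>^2))\<bar> \<le> h/\<sigma> + h^2/(2*\<sigma>^2)"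
proof -
  define a where "a = u^2/(2*\<sigma>^2)"
  define b where "b = u'^2/(2*\<sigma>^2)"
  have h0: "h \<ge> 0" using assms by simp
  have ab: "0 \<le> a" "a \<le> b" unfolding a_def b_def using assms
    by (auto intro!: divide_right_mono power_mono)
  have e1: "exp (-(u^2)/(2*\<sigma>^2)) = exp (-a)" "exp (-(u'^2)/(2*\<sigma>^2)) = exp (-b)"
    by (simp_all add: a_def b_def)
  have "(u' - u) * (u' + u) = u'^2 - u^2" by (simp add: algebra_simps power2_eq_square)
  hence "b - a = (u' - u) * (u' + u) / (2*\<sigma>^2)"
    by (simp add: a_def b_def diff_divide_distrib)
  also have "\<dots> \<le> h * (2*u + h) / (2*\<sigma>^2)"
    using assms by (intro divide_right_mono mult_mono) auto
  finally have ba: "b - a \<le> h * (2*u + h) / (2*\<sigma>^2)" .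
  have "\<bar>exp (-a) - exp (-b)\<bar> \<le> (b - a) * exp (-a)" by (rule exp_diff_le[OF ab])
  also have "\<dots> \<le> h * (2*u + h) / (2*\<sigma>^2) * exp (-a)"
    using ba by (intro mult_right_mono) auto
  also have "\<dots> = h / \<sigma> * ((u/\<sigma>) * exp (-((u/\<sigma>)^2)/2)) + h^2/(2*\<sigma>^2) * exp (-a)"
    using assms by (simp add: a_def field_simps power2_eq_square)
  also have "\<dots> \<le> h / \<sigma> * 1 + h^2/(2*\<sigma>^2) * 1"
    using assms h0 by (intro add_mono mult_left_mono v_exp_le) (auto simp: ab)
  finally show ?thesis using e1 by simp
qed

lemma aux_s:
  fixes \<delta> \<sigma> \<sigma>' u :: real
  assumes "\<delta> > 0" "\<delta> \<le> \<sigma>" "\<sigma> \<le> \<sigma>'"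
  shows "\<bar>exp (-(u^2)/(2*\<sigma>^2)) - exp (-(u^2)/(2*\<sigma>'^2))\<bar> \<le> (\<sigma> + \<sigma>') * (\<sigma>' - \<sigma>) / \<delta>^2"
proof -
  define a where "a = u^2/(2*\<sigma>'^2)"
  define b where "b = u^2/(2*\<sigma>^2)"
  have pos: "\<sigma> > 0" "\<sigma>' > 0" using assms by auto
  have ab: "0 \<le> a" "a \<le> b" unfolding a_def b_def using assms pos
    by (auto intro!: divide_left_mono mult_pos_pos power_mono)
  have e1: "exp (-(u^2)/(2*\<sigma>'^2)) = exp (-a)" "exp (-(u^2)/(2*\<sigma>^2)) = exp (-b)"
    by (simp_all add: a_def b_def)
  have "b - a = a * ((\<sigma>' + \<sigma>) * (\<sigma>' - \<sigma>) / \<sigma>^2)"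
    using pos by (simp add: a_def b_def field_simps power2_eq_square)
  have "\<bar>exp (-a) - exp (-b)\<bar> \<le> (b - a) * exp (-a)" by (rule exp_diff_le[OF ab])
  also have "\<dots> = (a * exp (-a)) * ((\<sigma>' + \<sigma>) * (\<sigma>' - \<sigma>) / \<sigma>^2)"
    using \<open>b - a = _\<close> by simp
  also have "\<dots> \<le> 1 * ((\<sigma>' + \<sigma>) * (\<sigma>' - \<sigma>) / \<sigma>^2)"
    using assms pos by (intro mult_right_mono w_exp_le) auto
  also have "\<dots> \<le> (\<sigma> + \<sigma>') * (\<sigma>' - \<sigma>) / \<delta>^2"
  proof -
    have "\<delta>^2 \<le> \<sigma>^2" using assms by (intro power_mono) auto
    moreover have "0 \<le> (\<sigma> + \<sigma>') * (\<sigma>' - \<sigma>)" using assms pos by simp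
    ultimately show ?thesis using assms by (simp add: frac_le add.commute)
  qed
  finally show ?thesis using e1 by (simp add: abs_minus_commute)
qed


lemma gauss_pos: "gauss_kernel \<sigma> x y > 0"
  by (simp add: gauss_kernel_def)

lemma gauss_le1: "gauss_kernel \<sigma> x y \<le> 1"
  by (simp add: gauss_kernel_def divide_nonneg_nonneg)

lemma gauss_x_lip:
  fixes x x' y :: "'a::real_normed_vector"
  assumes "\<delta> > 0" "\<delta> \<le> \<sigma>"
  shows "\<bar>gauss_kernel \<sigma> x y - gauss_kernel \<sigma> x' y\<bar> \<le> norm (x - x')/\<delta> + (norm (x - x'))^2/\<delta>^2"
proof -
  define h where "h = norm (x - x')"
  have sp: "\<sigma> > 0" using assms by simp
  have t1: "norm (x' - y) \<le> norm (x - y) + h" unfolding h_def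
    using norm_triangle_ineq[of "x' - x" "x - y"] by (simp add: norm_minus_commute)
  have t2: "norm (x - y) \<le> norm (x' - y) + h" unfolding h_def
    using norm_triangle_ineq[of "x - x'" "x' - y"] by simp
  have "\<bar>gauss_kernel \<sigma> x y - gauss_kernel \<sigma> x' y\<bar> \<le> h/\<sigma> + h^2/(2*\<sigma>^2)"
  proof (cases "norm (x - y) \<le> norm (x' - y)")
    case True
    then show ?thesis unfolding gauss_kernel_def using aux_x[OF sp _ True t1] by simp
  next
    case False
    then show ?thesis unfolding gauss_kernel_def using aux_x[OF sp _ _ t2]
      by (simp add: abs_minus_commute)
  qed
  also have "\<dots> \<le> h/\<delta> + h^2/\<delta>^2"
  proof (intro add_mono)
    show "h/\<sigma> \<le> h/\<delta>" using assms by (intro divide_left_mono) (auto simp: h_def)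
    have "\<delta>^2 \<le> \<sigma>^2" using assms power_mono[of \<delta> \<sigma> 2] by simp
    hence "\<delta>^2 \<le> 2*\<sigma>^2" using zero_le_power2[of \<sigma>] by linarith
    thus "h^2/(2*\<sigma>^2) \<le> h^2/\<delta>^2" using assms by (intro divide_left_mono) auto
  qed
  finally show ?thesis by (simp add: h_def)
qed

lemma gauss_s_lip:
  assumes "\<delta> > 0" "\<delta> \<le> \<sigma>" "\<delta> \<le> \<sigma>'"
  shows "\<bar>gauss_kernel \<sigma> x y - gauss_kernel \<sigma>' x y\<bar> \<le> (\<sigma> + \<sigma>') * \<bar>\<sigma> - \<sigma>'\<bar> / \<delta>^2"
proof (cases "\<sigma> \<le> \<sigma>'")
  case True
  then show ?thesis using aux_s[OF assms(1,2) True, of "norm (x - y)"] by (simp add: gauss_kernel_def)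
next
  case False
  then show ?thesis using aux_s[OF assms(1,3), of \<sigma> "norm (x - y)"]
    by (simp add: gauss_kernel_def abs_minus_commute add.commute)
qed

lemma gauss_lower:
  fixes x y :: "'a::real_normed_vector"
  assumes "\<delta> > 0" "\<delta> \<le> \<sigma>"
  shows "exp (-((norm x)^2)/\<delta>^2) * exp (-((norm y)^2)/\<delta>^2) \<le> gauss_kernel \<sigma> x y"
proof -
  have sp: "\<sigma> > 0" using assms by simp
  have "norm (x - y) \<le> norm x + norm y" by (rule norm_triangle_ineq4)
  hence "(norm (x - y))^2 \<le> (norm x + norm y)^2" by (intro power_mono) auto
  also have "\<dots> \<le> 2 * ((norm x)^2 + (norm y)^2)"
    using power2_diff[of "norm x" "norm y"] zero_le_power2[of "norm x - norm y"]
    by (simp add: power2_sum)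
  finally have a: "(norm (x - y))^2 \<le> 2 * ((norm x)^2 + (norm y)^2)" .
  have "(norm (x - y))^2/(2*\<sigma>^2) \<le> 2 * ((norm x)^2 + (norm y)^2) / (2*\<sigma>^2)"
    using sp a by (intro divide_right_mono) auto
  also have "\<dots> = ((norm x)^2 + (norm y)^2) / \<sigma>^2" using sp by (simp add: field_simps)
  also have "\<dots> \<le> ((norm x)^2 + (norm y)^2) / \<delta>^2"
    using assms power_mono[of \<delta> \<sigma> 2] by (intro divide_left_mono) auto
  finally have b: "(norm (x - y))^2/(2*\<sigma>^2) \<le> ((norm x)^2 + (norm y)^2) / \<delta>^2" .
  have "exp (-((norm x)^2)/\<delta>^2) * exp (-((norm y)^2)/\<delta>^2) = exp (-(((norm x)^2 + (norm y)^2) / \<delta>^2))"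
    by (simp add: exp_add[symmetric] add_divide_distrib)
  also have "\<dots> \<le> exp (-((norm (x - y))^2/(2*\<sigma>^2)))" using b by simp
  finally show ?thesis by (simp add: gauss_kernel_def)
qed

lemma ln_diff_le:
  fixes A B :: real
  assumes "A > 0" "B > 0"
  shows "\<bar>ln A - ln B\<bar> \<le> \<bar>A - B\<bar> / min A B"
proof -
  have 1: "ln (A/B) \<le> A/B - 1" using assms by (intro ln_le_minus_one) auto
  have 2: "ln (B/A) \<le> B/A - 1" using assms by (intro ln_le_minus_one) auto
  have e1: "ln (A/B) = ln A - ln B" "ln (B/A) = ln B - ln A" using assms by (simp_all add: ln_div)
  have e2: "A/B - 1 = (A - B)/B" "B/A - 1 = (B - A)/A" using assms by (simp_all add: field_simps)
  show ?thesis
  proof (cases "A \<le> B")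
    case True
    hence "ln A - ln B \<le> 0" using assms by simp
    moreover have "ln B - ln A \<le> (B - A)/A" using 2 e1 e2 by simp
    ultimately show ?thesis using True by (simp add: abs_if)
  next
    case False
    hence "ln B - ln A \<le> 0" using assms by simp
    moreover have "ln A - ln B \<le> (A - B)/B" using 1 e1 e2 by simp
    ultimately show ?thesis using False by (simp add: abs_if)
  qed
qed

lemma avg_diff_le:
  fixes f g :: "nat \<Rightarrow> real"
  assumes "n > 0" "\<And>j. j \<in> {1..n} \<Longrightarrow> \<bar>f j - g j\<bar> \<le> c"
  shows "\<bar>(1 / real n) * (\<Sum>j=1..n. f j) - (1 / real n) * (\<Sum>j=1..n. g j)\<bar> \<le> c"
proof -
  have "\<bar>(\<Sum>j=1..n. f j) - (\<Sum>j=1..n. g j)\<bar> = \<bar>\<Sum>j=1..n. f j - g j\<bar>" by (simp add: sum_subtractf)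
  also have "\<dots> \<le> (\<Sum>j=1..n. \<bar>f j - g j\<bar>)" by (rule sum_abs)
  also have "\<dots> \<le> (\<Sum>j=1..n. c)" using assms by (intro sum_mono) auto
  also have "\<dots> = real n * c" by simp
  finally have a: "\<bar>(\<Sum>j=1..n. f j) - (\<Sum>j=1..n. g j)\<bar> \<le> real n * c" .
  have "\<bar>(1 / real n) * (\<Sum>j=1..n. f j) - (1 / real n) * (\<Sum>j=1..n. g j)\<bar>
        = \<bar>(\<Sum>j=1..n. f j) - (\<Sum>j=1..n. g j)\<bar> / real n"
    using assms by (simp add: diff_divide_distrib[symmetric] abs_divide)
  also have "\<dots> \<le> c" using a assms by (simp add: divide_le_eq mult.commute)
  finally show ?thesis .
qed

lemma int_diff_le:
  fixes f g :: "'a \<Rightarrow> real"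
  assumes "prob_space P" "integrable P f" "integrable P g" "\<And>y. \<bar>f y - g y\<bar> \<le> c"
  shows "\<bar>integral\<^sup>L P f - integral\<^sup>L P g\<bar> \<le> c"
proof -
  interpret prob_space P by fact
  have "\<bar>integral\<^sup>L P f - integral\<^sup>L P g\<bar> = \<bar>integral\<^sup>L P (\<lambda>y. f y - g y)\<bar>"
    using assms by simp
  also have "\<dots> \<le> integral\<^sup>L P (\<lambda>y. \<bar>f y - g y\<bar>)"
    using integral_norm_bound[of P "\<lambda>y. f y - g y"] by simp
  also have "\<dots> \<le> integral\<^sup>L P (\<lambda>y. c)"
    using assms by (intro integral_mono) auto
  also have "\<dots> = c" by (simp add: prob_space)
  finally show ?thesis .
qed


lemma gauss_meas [measurable]: "gauss_kernel \<sigma> x \<in> borel_measurable borel"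
proof (cases "\<sigma> = 0")
  case True
  hence "gauss_kernel \<sigma> x = (\<lambda>_. 1)" by (auto simp: gauss_kernel_def fun_eq_iff)
  then show ?thesis by simp
next
  case False
  then show ?thesis
    unfolding gauss_kernel_def by (intro borel_measurable_continuous_onI continuous_intros) auto
qed

definition gx :: "nat \<Rightarrow> (real ^ 'd) set" where
  "gx n = (\<lambda>g. \<chi> k. real_of_int (g k) / real n) ` (PiE UNIV (\<lambda>_::'d. {-(int n^2)..int n^2}))"

definition gs :: "real \<Rightarrow> nat \<Rightarrow> real set" where
  "gs \<delta> n = (\<lambda>k. \<delta> + real k / (real n)^2) ` {0..n^3}"

lemma gx_fin: "finite (gx n)"
  unfolding gx_def by (intro finite_imageI finite_PiE) auto

lemma gs_fin: "finite (gs \<delta> n)"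
  unfolding gs_def by auto

lemma gx_card: "card (gx n :: (real ^ 'd) set) \<le> (2*n^2+1)^CARD('d)"
proof -
  have "card (gx n :: (real ^ 'd) set) \<le> card (PiE UNIV (\<lambda>_::'d. {-(int n^2)..int n^2}))"
    unfolding gx_def by (intro card_image_le finite_PiE) auto
  also have "\<dots> = (\<Prod>i\<in>(UNIV::'d set). card {-(int n^2)..int n^2})" by (rule card_PiE) simp
  also have "\<dots> = (2*n^2+1)^CARD('d)"
  proof -
    have e: "nat ((int n)^2) = n^2" by (metis nat_int of_nat_power)
    show ?thesis by (simp add: e nat_add_distrib nat_mult_distrib)
  qed
  finally show ?thesis by simp
qed

lemma gs_card: "card (gs \<delta> n) \<le> n^3+1"
proof -
  have "card (gs \<delta> n) \<le> card {0..n^3}" unfolding gs_def by (rule card_image_le) auto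
  thus ?thesis by simp
qed

lemma grid_card:
  assumes "n \<ge> 3"
  shows "real (card (gx n \<times> gs \<delta> n :: ((real ^ 'd) \<times> real) set)) \<le> real n ^ (3*CARD('d)+4)"
proof -
  have a: "2*n^2+1 \<le> n^3"
  proof -
    have "2*n^2+1 \<le> 3*n^2" using assms by simp
    also have "\<dots> \<le> n*n^2" using assms by (intro mult_right_mono) auto
    finally show ?thesis by (simp add: power3_eq_cube power2_eq_square)
  qed
  have b: "n^3+1 \<le> n^4"
  proof -
    have "n^3+1 \<le> 2*n^3" using assms by simp
    also have "\<dots> \<le> n*n^3" using assms by (intro mult_right_mono) auto
    finally show ?thesis by (simp add: power_Suc[symmetric] numeral_eq_Suc)
  qed
  have "card (gx n \<times> gs \<delta> n :: ((real ^ 'd) \<times> real) set) = card (gx n :: (real ^ 'd) set) * card (gs \<delta> n)"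
    by (rule card_cartesian_product)
  also have "\<dots> \<le> (2*n^2+1)^CARD('d) * (n^3+1)" by (intro mult_mono gx_card gs_card) auto
  also have "\<dots> \<le> (n^3)^CARD('d) * n^4" by (intro mult_mono power_mono a b) auto
  also have "\<dots> = n^(3*CARD('d)+4)" by (simp add: power_mult[symmetric] power_add)
  finally have "card (gx n \<times> gs \<delta> n :: ((real ^ 'd) \<times> real) set) \<le> n^(3*CARD('d)+4)" .
  hence "real (card (gx n \<times> gs \<delta> n :: ((real ^ 'd) \<times> real) set)) \<le> real (n^(3*CARD('d)+4))"
    by (rule of_nat_mono)
  thus ?thesis by simp
qed

lemma gx_cover:
  fixes x :: "real ^ 'd"
  assumes "n \<ge> 1" "norm x \<le> real n"
  shows "\<exists>x'\<in>gx n. norm (x - x') \<le> real CARD('d) / real n"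
proof -
  define g where "g k = \<lfloor>real n * x$k\<rfloor>" for k
  have np: "real n > 0" using assms by simp
  have gk: "g k \<in> {-(int n^2)..int n^2}" for k
  proof -
    have "\<bar>x$k\<bar> \<le> real n" using component_le_norm_cart[of x k] assms by simp
    hence "\<bar>real n * x$k\<bar> \<le> real n * real n" using np by (simp add: abs_mult mult_left_mono)
    hence 1: "-(real n * real n) \<le> real n * x$k" "real n * x$k \<le> real n * real n" by (simp_all add: abs_le_iff)
    have "-(int n^2) \<le> g k" unfolding g_def using 1(1)
      by (simp add: le_floor_iff power2_eq_square)
    moreover have "g k \<le> int n^2" unfolding g_def using 1(2)
      by (simp add: floor_le_iff power2_eq_square)
    ultimately show ?thesis by simp
  qed
  define x' where "x' = (\<chi> k. real_of_int (g k) / real n)"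
  have x'in: "x' \<in> gx n" unfolding gx_def x'_def using gk by (auto simp: PiE_UNIV_domain)
  have ck: "\<bar>(x - x')$k\<bar> \<le> 1 / real n" for k
  proof -
    have "real_of_int (g k) \<le> real n * x$k" "real n * x$k < real_of_int (g k) + 1"
      unfolding g_def by linarith+
    hence "\<bar>real n * x$k - real_of_int (g k)\<bar> \<le> 1" by simp
    moreover have "(x - x')$k = (real n * x$k - real_of_int (g k)) / real n"
      unfolding x'_def using np by (simp add: field_simps)
    ultimately show ?thesis using np by (simp add: abs_divide divide_right_mono)
  qed
  have "norm (x - x') \<le> (\<Sum>k\<in>UNIV. \<bar>(x - x')$k\<bar>)" by (rule norm_le_l1_cart)
  also have "\<dots> \<le> (\<Sum>k\<in>(UNIV::'d set). 1 / real n)" by (intro sum_mono ck)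
  also have "\<dots> = real CARD('d) / real n" by simp
  finally show ?thesis using x'in by blast
qed

lemma gs_cover:
  assumes "n \<ge> 1" "\<delta> \<le> \<sigma>" "\<sigma> \<le> \<delta> + real n"
  shows "\<exists>\<sigma>'\<in>gs \<delta> n. \<delta> \<le> \<sigma>' \<and> \<sigma>' \<le> \<sigma> \<and> \<sigma> - \<sigma>' \<le> 1 / (real n)^2"
proof -
  have np: "real n > 0" using assms by simp
  define y where "y = (\<sigma> - \<delta>) * (real n)^2"
  have y0: "y \<ge> 0" unfolding y_def using assms by simp
  have y1: "y \<le> real n ^ 3" unfolding y_def using assms np
    by (auto simp: power3_eq_cube power2_eq_square intro!: mult_right_mono)
  define k where "k = nat \<lfloor>y\<rfloor>"
  have kr: "real k \<le> y" "y < real k + 1" unfolding k_def using y0 by linarith+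
  have kb: "k \<le> n^3"
  proof -
    have "real k \<le> real n ^ 3" using kr y1 by linarith
    thus ?thesis by (metis of_nat_le_iff of_nat_power)
  qed
  define \<sigma>' where "\<sigma>' = \<delta> + real k / (real n)^2"
  have "\<sigma>' \<in> gs \<delta> n" unfolding gs_def \<sigma>'_def using kb by auto
  moreover have "\<delta> \<le> \<sigma>'" unfolding \<sigma>'_def by simp
  moreover have "real k / (real n)^2 \<le> \<sigma> - \<delta>" using kr np unfolding y_def by (simp add: divide_le_eq)
  hence "\<sigma>' \<le> \<sigma>" unfolding \<sigma>'_def by simp
  moreover have "\<sigma> - \<delta> < (real k + 1) / (real n)^2" using kr np unfolding y_def by (simp add: field_simps)
  hence "\<sigma> - \<sigma>' \<le> 1 / (real n)^2" unfolding \<sigma>'_def by (simp add: add_divide_distrib)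
  ultimately show ?thesis by blast
qed

lemma real_final:
  fixes A B s cc n a \<alpha> :: real
  assumes AB: "\<bar>A - B\<bar> \<le> 2 * s" and Bl: "B \<ge> cc * n powr (-\<alpha>)" and sm: "4 * s \<le> cc * n powr (-\<alpha>)"
    and cc: "cc > 0" and np: "n > 0" and sdef: "s = sqrt (a * ln n / n)" and a0: "a \<ge> 0" and l0: "ln n \<ge> 0"
  shows "A > 0 \<and> \<bar>ln A - ln B\<bar> \<le> (4 * sqrt a/cc) * (n powr (\<alpha> - 1/2) * sqrt (ln n))"
proof -
  have s0: "s \<ge> 0" using sdef a0 l0 np by simp
  have pp: "n powr (-\<alpha>) > 0" using np by simp
  have Bp: "B > 0" using Bl cc pp s0 sm by (smt (verit) mult_pos_pos)
  have "B \<ge> 4 * s" using Bl sm by simp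
  hence A2: "A \<ge> B/2" using AB by (simp add: abs_le_iff)
  hence Ap: "A > 0" using Bp by simp
  have mn: "min A B \<ge> B/2" using A2 Bp by simp
  have "\<bar>ln A - ln B\<bar> \<le> \<bar>A - B\<bar> / min A B" by (rule ln_diff_le[OF Ap Bp])
  also have "\<dots> \<le> (2 * s) / (B/2)"
    using AB mn Bp s0 by (intro frac_le) auto
  also have "\<dots> = 4 * s / B" by simp
  also have "\<dots> \<le> 4 * s / (cc * n powr (-\<alpha>))"
    using Bl cc pp s0 Bp by (intro divide_left_mono mult_pos_pos) auto
  also have "\<dots> = (4 * sqrt a/cc) * (n powr (\<alpha> - 1/2) * sqrt (ln n))"
  proof -
    define p where "p = n powr \<alpha>"
    define q where "q = n powr (1/2)"
    have p0: "p > 0" "q > 0" using np by (simp_all add: p_def q_def)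
    have e1: "s = sqrt a * sqrt (ln n) / q"
      using sdef np by (simp add: real_sqrt_mult real_sqrt_divide powr_half_sqrt q_def)
    have e2: "n powr (\<alpha> - 1/2) = p / q" unfolding p_def q_def by (rule powr_diff)
    have e3: "n powr (-\<alpha>) = 1 / p" by (simp add: powr_minus divide_inverse p_def)
    show ?thesis unfolding e1 e2 e3 using p0 cc by (simp add: field_simps)
  qed
  finally show ?thesis using Ap by simp
qed

lemma ev_real_ge: "eventually (\<lambda>n::nat. Z \<le> real n) sequentially"
  using filterlim_real_sequentially unfolding filterlim_at_top by blast

lemma sqrt_le_of_sq: "0 \<le> v \<Longrightarrow> u \<le> v^2 \<Longrightarrow> sqrt u \<le> v"
  by (metis real_sqrt_abs real_sqrt_le_mono abs_of_nonneg)

lemma pw_box: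
  fixes x c1 d :: real
  assumes "c1 > 0" "x \<ge> 1" "x \<ge> 4 * \<bar>d\<bar>" "x \<ge> 8 / c1"
  shows "sqrt d + sqrt (2 * ln x / c1) \<le> x"
proof -
  have a: "sqrt d \<le> x/2"
  proof -
    have "sqrt d \<le> sqrt \<bar>d\<bar>" by (intro real_sqrt_le_mono) simp
    also have "\<dots> \<le> x/2"
    proof (rule sqrt_le_of_sq)
      show "0 \<le> x/2" using assms by simp
      have "\<bar>d\<bar> \<le> x/4" using assms by simp
      also have "\<dots> \<le> x * x / 4" using assms by (simp add: divide_right_mono)
      finally show "\<bar>d\<bar> \<le> (x/2)^2" by (simp add: power2_eq_square)
    qed
    finally show ?thesis .
  qed
  have b: "sqrt (2 * ln x / c1) \<le> x/2"
  proof (rule sqrt_le_of_sq)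
    show "0 \<le> x/2" using assms by simp
    have "ln x \<le> x" using ln_le_minus_one[of x] assms by simp
    hence "2 * ln x / c1 \<le> 2 * x / c1" using assms by (simp add: divide_right_mono)
    also have "\<dots> = x * (2 / c1)" by simp
    also have "\<dots> \<le> x * (x / 4)"
    proof -
      have "2 / c1 \<le> x / 4" using assms by (simp add: field_simps)
      thus ?thesis using assms by (intro mult_left_mono) auto
    qed
    finally show "2 * ln x / c1 \<le> (x/2)^2" by (simp add: power2_eq_square)
  qed
  show ?thesis using a b by simp
qed

lemma ev_box:
  assumes "c1 > 0"
  shows "eventually (\<lambda>n::nat. sqrt d + sqrt (2 * ln (real n) / c1) \<le> real n) sequentially"
  by (rule eventually_mono[OF ev_real_ge[of "max 1 (max (4 * \<bar>d\<bar>) (8 / c1))"]])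
     (rule pw_box[OF assms], auto)

lemma ev_M:
  assumes "c1 > 0"
  shows "eventually (\<lambda>n::nat. Mx \<le> sqrt (2 * ln (real n) / c1)) sequentially"
proof (rule eventually_mono[OF ev_real_ge[of "exp (c1 * Mx^2 / 2)"]])
  fix n :: nat assume h: "exp (c1 * Mx^2 / 2) \<le> real n"
  have np: "real n > 0" using h by (smt (verit) exp_gt_zero)
  have "c1 * Mx^2 / 2 \<le> ln (real n)" using h np by (metis ln_exp ln_le_cancel_iff exp_gt_zero)
  hence "Mx^2 \<le> 2 * ln (real n) / c1" using assms by (simp add: field_simps)
  hence "sqrt (Mx^2) \<le> sqrt (2 * ln (real n) / c1)" by (rule real_sqrt_le_mono)
  thus "Mx \<le> sqrt (2 * ln (real n) / c1)" by simp
qed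

lemma ev_err:
  fixes Q a :: real
  assumes "a > 0"
  shows "eventually (\<lambda>n::nat. Q / real n \<le> sqrt (a * ln (real n) / real n)) sequentially"
proof (rule eventually_mono[OF ev_real_ge[of "max 3 (Q^2 / a)"]])
  fix n :: nat assume h: "max 3 (Q^2 / a) \<le> real n"
  define x where "x = real n"
  have x3: "x \<ge> 3" "Q^2 / a \<le> x" using h by (auto simp: x_def)
  have xp: "x > 0" using x3 by simp
  have l1: "ln x \<ge> 1"
  proof -
    have "exp 1 \<le> x" using exp_le x3 by simp
    thus ?thesis using xp by (metis ln_exp ln_le_cancel_iff exp_gt_zero)
  qed
  have "Q^2 \<le> a * x" using x3 assms by (simp add: divide_le_eq mult.commute)
  hence "Q^2 / x \<le> a" using xp by (simp add: divide_le_eq mult.commute)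
  also have "\<dots> \<le> a * ln x" using l1 assms by simp
  finally have "Q^2 / x \<le> a * ln x" .
  hence "(Q^2 / x) / x \<le> (a * ln x) / x" using xp by (intro divide_right_mono) auto
  hence "(Q / x)^2 \<le> a * ln x / x" by (simp add: power2_eq_square)
  hence "sqrt ((Q / x)^2) \<le> sqrt (a * ln x / x)" by (rule real_sqrt_le_mono)
  hence "\<bar>Q / x\<bar> \<le> sqrt (a * ln x / x)" by simp
  hence "Q / x \<le> sqrt (a * ln x / x)" using abs_ge_self[of "Q / x"] by linarith
  thus "Q / real n \<le> sqrt (a * ln (real n) / real n)" unfolding x_def by simp
qed

lemma pw_small:
  fixes x a cc \<alpha> :: real
  assumes ap: "a > 0" and ccp: "cc > 0" and al: "0 < \<alpha>" "\<alpha> < 1/2" and x1: "x \<ge> 1"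
    and xb: "x \<ge> (2 / ((cc^2 / (16 * a)) * (1 - 2*\<alpha>))) powr (2 / (1 - 2*\<alpha>))"
  shows "4 * sqrt (a * ln x / x) \<le> cc * x powr (-\<alpha>)"
proof -
  define \<beta> where "\<beta> = 1 - 2*\<alpha>"
  define K where "K = cc^2 / (16 * a)"
  have bp: "\<beta> > 0" using al by (simp add: \<beta>_def)
  have Kp: "K > 0" using ap ccp by (simp add: K_def)
  have xp: "x > 0" using x1 by simp
  have l: "ln x \<le> x powr (\<beta>/2) / (\<beta>/2)" using ln_powr_bound[OF x1, of "\<beta>/2"] bp by simp
  have t: "2 / (K * \<beta>) \<le> x powr (\<beta>/2)"
  proof -
    have c0: "2 / (K * \<beta>) > 0" using Kp bp by simp
    have "(2 / (K * \<beta>)) powr (2/\<beta>) \<le> x" using xb unfolding K_def \<beta>_def by simp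
    hence "((2 / (K * \<beta>)) powr (2/\<beta>)) powr (\<beta>/2) \<le> x powr (\<beta>/2)"
      using bp by (intro powr_mono2) auto
    also have "((2 / (K * \<beta>)) powr (2/\<beta>)) powr (\<beta>/2) = 2 / (K * \<beta>)"
      using bp c0 by (simp add: powr_powr)
    finally show ?thesis .
  qed
  have "ln x \<le> (2/\<beta>) * x powr (\<beta>/2)" using l bp by (simp add: field_simps)
  also have "\<dots> \<le> (2/\<beta>) * x powr (\<beta>/2) * ((K * \<beta> / 2) * x powr (\<beta>/2))"
  proof -
    have "1 \<le> (K * \<beta> / 2) * x powr (\<beta>/2)" using t Kp bp by (simp add: field_simps)
    moreover have "0 \<le> (2/\<beta>) * x powr (\<beta>/2)" using bp by simp
    ultimately show ?thesis by (metis mult_left_mono mult.right_neutral)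
  qed
  also have "\<dots> = K * (x powr (\<beta>/2) * x powr (\<beta>/2))" using bp by (simp add: field_simps)
  also have "x powr (\<beta>/2) * x powr (\<beta>/2) = x powr \<beta>" by (simp add: powr_add[symmetric])
  finally have lnK: "ln x \<le> K * x powr \<beta>" .
  have "16 * (a * ln x / x) \<le> 16 * (a * (K * x powr \<beta>) / x)"
    using lnK ap xp by (intro mult_left_mono divide_right_mono) auto
  also have "\<dots> = cc^2 * (x powr \<beta> / x)" unfolding K_def using ap by (simp add: field_simps)
  also have "x powr \<beta> / x = x powr (-\<alpha>) * x powr (-\<alpha>)"
  proof -
    have "x powr \<beta> / x = x powr (\<beta> - 1)" using xp by (simp add: powr_diff)
    also have "\<dots> = x powr (-\<alpha> + -\<alpha>)" unfolding \<beta>_def by simp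
    also have "\<dots> = x powr (-\<alpha>) * x powr (-\<alpha>)" by (rule powr_add)
    finally show ?thesis .
  qed
  finally have "16 * (a * ln x / x) \<le> (cc * x powr (-\<alpha>))^2" by (simp add: power2_eq_square mult_ac)
  hence "sqrt (16 * (a * ln x / x)) \<le> cc * x powr (-\<alpha>)"
    using ccp by (intro sqrt_le_of_sq) auto
  moreover have "sqrt (16 * (a * ln x / x)) = 4 * sqrt (a * ln x / x)"
  proof -
    have "sqrt 16 = (4::real)" by (rule real_sqrt_unique) auto
    thus ?thesis by (simp only: real_sqrt_mult)
  qed
  ultimately show ?thesis by simp
qed

lemma ev_small:
  fixes a cc \<alpha> :: real
  assumes "a > 0" "cc > 0" "0 < \<alpha>" "\<alpha> < 1/2"
  shows "eventually (\<lambda>n::nat. 4 * sqrt (a * ln (real n) / real n) \<le> cc * real n powr (-\<alpha>)) sequentially"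
  by (rule eventually_mono[OF ev_real_ge[of "max 1 ((2 / ((cc^2 / (16 * a)) * (1 - 2*\<alpha>))) powr (2 / (1 - 2*\<alpha>)))"]])
     (rule pw_small[OF assms], auto)

locale kde_setup =
  fixes M :: "'a measure" and X :: "nat \<Rightarrow> 'a \<Rightarrow> real ^ 'd" and \<mu> :: "(real ^ 'd) measure"
  assumes M_prob: "prob_space M" and X_meas: "\<And>i. X i \<in> borel_measurable M"
    and X_indep: "prob_space.indep_vars M (\<lambda>_. borel) X UNIV"
    and X_law: "\<And>i. distr M borel (X i) = \<mu>"
begin

interpretation M: prob_space M by (rule M_prob)

lemma mu_prob: "prob_space \<mu>"
  using M.prob_space_distr[OF X_meas[of 0]] X_law[of 0] by simp

lemma sets_mu: "sets \<mu> = sets borel"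
  using X_law[of 0] by (metis sets_distr)

lemma space_mu: "space \<mu> = UNIV"
  using X_law[of 0] by (metis space_distr space_borel)

lemma gauss_int: "integrable \<mu> (gauss_kernel \<sigma> x)"
proof -
  interpret P: prob_space \<mu> by (rule mu_prob)
  show ?thesis
    by (rule P.integrable_const_bound[where B=1])
       (auto simp: gauss_le1 less_imp_le[OF gauss_pos] measurable_cong_sets[OF sets_mu refl])
qed

lemma hoeff:
  assumes "n > 0" "\<epsilon> \<ge> 0"
  shows "M.prob {\<omega>\<in>space M. \<bar>(\<Sum>j\<in>{1..n}. gauss_kernel \<sigma> x (X j \<omega>)) / real n
            - integral\<^sup>L \<mu> (gauss_kernel \<sigma> x)\<bar> \<ge> \<epsilon>} \<le> 2 * exp (-2 * real n * \<epsilon>^2)"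
proof -
  define Z where "Z = (\<lambda>j \<omega>. gauss_kernel \<sigma> x (X j \<omega>))"
  have Zm: "Z j \<in> borel_measurable M" for j
    unfolding Z_def using X_meas[of j] by measurable
  have ind: "M.indep_vars (\<lambda>_. borel) Z {1..n}"
    using M.indep_vars_subset[OF M.indep_vars_compose2[OF X_indep, of "\<lambda>_. gauss_kernel \<sigma> x" "\<lambda>_. borel"]]
    unfolding Z_def by auto
  have dZ: "distr M borel (Z j) = distr \<mu> borel (gauss_kernel \<sigma> x)" for j
  proof -
    have "distr (distr M borel (X j)) borel (gauss_kernel \<sigma> x) = distr M borel (gauss_kernel \<sigma> x \<circ> X j)"
      by (rule distr_distr) (auto simp: X_meas)
    thus ?thesis using X_law[of j] by (simp add: Z_def comp_def)
  qed
  have EZ: "M.expectation (Z 1) = integral\<^sup>L \<mu> (gauss_kernel \<sigma> x)"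
  proof -
    have "integral\<^sup>L (distr M borel (X 1)) (gauss_kernel \<sigma> x) = M.expectation (\<lambda>\<omega>. gauss_kernel \<sigma> x (X 1 \<omega>))"
      by (rule integral_distr) (auto simp: X_meas)
    thus ?thesis using X_law[of 1] by (simp add: Z_def)
  qed
  interpret H: Hoeffding_ineq_iid M "{1..n}" Z "Z 1" 0 1 "M.expectation (Z 1)"
  proof unfold_locales
    show "M.indep_vars (\<lambda>_. borel) Z {1..n}" by (rule ind)
    show "distr M borel (Z i) = distr M borel (Z 1)" for i using dZ by simp
    show "Z 1 \<in> borel_measurable M" by (rule Zm)
    show "AE xa in M. Z 1 xa \<in> {0..1}" by (auto simp: Z_def gauss_le1 less_imp_le[OF gauss_pos])
  qed auto
  have "M.prob {\<omega>\<in>space M. \<bar>(\<Sum>j\<in>{1..n}. Z j \<omega>) / real (card {1..n}) - M.expectation (Z 1)\<bar> \<ge> \<epsilon>}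
        \<le> 2 * exp (-2 * real (card {1..n}) * \<epsilon>\<^sup>2 / (1 - 0)\<^sup>2)"
    by (rule H.Hoeffding_ineq_abs_ge') (use assms in auto)
  thus ?thesis using EZ by (simp add: Z_def)
qed

lemma norm_ev:
  assumes c1: "c1 > 0"
    and conc: "\<forall>t\<ge>0. measure \<mu> {x\<in>space \<mu>. norm x \<ge> r + t} \<le> C * exp (- c1 * t^2)"
  shows "AE \<omega> in M. eventually (\<lambda>n. norm (X n \<omega>) < r + sqrt (2 * ln (real n) / c1)) sequentially"
proof -
  define t where "t n = sqrt (2 * ln (real n) / c1)" for n :: nat
  define A where "A n = {\<omega>\<in>space M. r + t n \<le> norm (X n \<omega>)}" for n
  have Am: "A n \<in> sets M" for n unfolding A_def using X_meas[of n] by measurable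
  have t0: "t n \<ge> 0" for n unfolding t_def using c1 by (cases "n = 0") auto
  have mA: "measure M (A n) \<le> C * exp(-c1 * (t n)^2)" for n
  proof -
    define S where "S = {x\<in>space \<mu>. r + t n \<le> norm x}"
    have S: "S \<in> sets borel"
    proof -
      have "{x\<in>space borel. r + t n \<le> norm (x::real^'d)} \<in> sets borel" by measurable
      thus ?thesis unfolding S_def using space_mu by simp
    qed
    have "measure M (A n) = measure (distr M borel (X n)) S"
      by (subst measure_distr[OF X_meas S]) (auto simp: A_def S_def space_mu intro!: arg_cong[where f="measure M"])
    also have "\<dots> = measure \<mu> S" by (simp add: X_law)
    also have "\<dots> \<le> C * exp(-c1 * (t n)^2)" using conc t0 unfolding S_def by simp
    finally show ?thesis .
  qed
  have mA2: "measure M (A n) \<le> C * inverse (real n ^ 2)" if "n \<ge> 1" for n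
  proof -
    have l: "ln (real n) \<ge> 0" using that by simp
    have "c1 * (t n)^2 = 2 * ln (real n)" unfolding t_def using l c1 by simp
    hence "exp(-c1 * (t n)^2) = exp (- ln (real n ^ 2))" using that by (simp add: ln_realpow)
    also have "\<dots> = inverse (real n ^ 2)" using that by (simp add: exp_minus)
    finally show ?thesis using mA[of n] by simp
  qed
  have sm: "summable (\<lambda>n. measure M (A n))"
  proof (rule summable_comparison_test_ev)
    show "eventually (\<lambda>n. norm (measure M (A n)) \<le> C * inverse (real n ^ 2)) sequentially"
      using mA2 by (auto simp: eventually_at_top_linorder intro!: exI[of _ 1])
    show "summable (\<lambda>n. C * inverse (real n ^ 2))"
      by (intro summable_mult inverse_power_summable) auto
  qed
  have "AE \<omega> in M. eventually (\<lambda>n. \<omega> \<in> space M - A n) sequentially"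
    by (rule borel_cantelli_AE1[OF Am _ sm]) (simp add: M.emeasure_finite less_top[symmetric])
  thus ?thesis
    by (rule eventually_mono) (auto elim!: eventually_mono simp: A_def t_def not_le)
qed

lemma grid_ev:
  "AE \<omega> in M. eventually (\<lambda>n. \<forall>x\<in>gx n. \<forall>\<sigma>\<in>gs \<delta> n.
      \<bar>(\<Sum>j\<in>{1..n}. gauss_kernel \<sigma> x (X j \<omega>)) / real n - integral\<^sup>L \<mu> (gauss_kernel \<sigma> x)\<bar>
      < sqrt (real (2*CARD('d)+3) * ln (real n) / real n)) sequentially"
proof -
  define a where "a = 2*CARD('d)+3"
  define s where "s n = sqrt (real a * ln (real n) / real n)" for n :: nat
  define B where "B n x \<sigma> = {\<omega>\<in>space M. s n \<le> \<bar>(\<Sum>j\<in>{1..n}. gauss_kernel \<sigma> x (X j \<omega>)) / real n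
      - integral\<^sup>L \<mu> (gauss_kernel \<sigma> x)\<bar>}" for n x \<sigma>
  define A where "A n = (\<Union>p\<in>gx n \<times> gs \<delta> n. B n (fst p) (snd p))" for n
  have Bm: "B n x \<sigma> \<in> sets M" for n x \<sigma>
    unfolding B_def using X_meas by measurable
  have fin: "finite (gx n \<times> gs \<delta> n)" for n using gx_fin gs_fin by auto
  have Am: "A n \<in> sets M" for n
    unfolding A_def using fin Bm by (intro sets.finite_UN) auto
  have mA: "measure M (A n) \<le> 2 * inverse (real n ^ 2)" if n3: "n \<ge> 3" for n
  proof -
    have np: "real n > 0" using n3 by simp
    have l: "ln (real n) \<ge> 0" using n3 by simp
    have s0: "s n \<ge> 0" unfolding s_def using l np by simp
    have ss: "2 * real n * (s n)^2 = real (2*a) * ln (real n)"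
      unfolding s_def using l np by simp
    have ex: "exp (-2 * real n * (s n)^2) = inverse (real n ^ (2*a))"
    proof -
      have "exp (-2 * real n * (s n)^2) = exp (- ln (real n ^ (2*a)))"
        using ss np by (simp add: ln_realpow)
      also have "\<dots> = inverse (real n ^ (2*a))" using np by (simp add: exp_minus)
      finally show ?thesis .
    qed
    have "measure M (A n) \<le> (\<Sum>p\<in>(gx n :: (real^'d) set) \<times> gs \<delta> n. measure M (B n (fst p) (snd p)))"
      unfolding A_def by (rule measure_UNION_le[OF fin]) (simp add: Bm)
    also have "\<dots> \<le> real (card ((gx n :: (real^'d) set) \<times> gs \<delta> n)) * (2 * exp (-2 * real n * (s n)^2))"
    proof -
      have hb: "measure M (B n x \<sigma>) \<le> 2 * exp (-2 * real n * (s n)^2)" for x \<sigma>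
        unfolding B_def by (rule hoeff) (use n3 s0 in auto)
      show ?thesis using hb by (simp add: sum_bounded_above)
    qed
    also have "\<dots> = real (card ((gx n :: (real^'d) set) \<times> gs \<delta> n)) * (2 * inverse (real n ^ (2*a)))"
      by (simp only: ex)
    also have "\<dots> \<le> real n ^ (3*CARD('d)+4) * (2 * inverse (real n ^ (2*a)))"
      by (intro mult_right_mono grid_card n3) auto
    also have "\<dots> = 2 * inverse (real n ^ (CARD('d)+2))"
    proof -
      have "real n ^ (2*a) = real n ^ (3*CARD('d)+4) * real n ^ (CARD('d)+2)"
      proof -
        have "2*a = (3*CARD('d)+4) + (CARD('d)+2)" unfolding a_def by simp
        thus ?thesis by (simp only: power_add)
      qed
      thus ?thesis using np by (simp add: field_simps)
    qed
    also have "\<dots> \<le> 2 * inverse (real n ^ 2)"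
      using n3 by (intro mult_left_mono le_imp_inverse_le power_increasing) auto
    finally show ?thesis .
  qed
  have sm: "summable (\<lambda>n. measure M (A n))"
  proof (rule summable_comparison_test_ev)
    show "eventually (\<lambda>n. norm (measure M (A n)) \<le> 2 * inverse (real n ^ 2)) sequentially"
      using mA by (auto simp: eventually_at_top_linorder intro!: exI[of _ 3])
    show "summable (\<lambda>n. 2 * inverse (real n ^ 2))"
      by (intro summable_mult inverse_power_summable) auto
  qed
  have "AE \<omega> in M. eventually (\<lambda>n. \<omega> \<in> space M - A n) sequentially"
    by (rule borel_cantelli_AE1[OF Am _ sm]) (simp add: M.emeasure_finite less_top[symmetric])
  thus ?thesis
    by (rule eventually_mono) (auto elim!: eventually_mono simp: A_def B_def s_def a_def not_le)
qed

lemma det_bound: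
  fixes Y :: "nat \<Rightarrow> real ^ 'd" and n :: nat and \<delta> c1 c0 d a :: real
  assumes d_def: "d = real CARD('d)" and a_def: "a = real (2*CARD('d)+3)"
    and dp: "\<delta> > 0" and c1p: "c1 > 0" and c0p: "c0 > 0"
    and lowG: "\<And>\<sigma> x. \<delta> \<le> \<sigma> \<Longrightarrow> integral\<^sup>L \<mu> (gauss_kernel \<sigma> x) \<ge> exp (-((norm x)^2)/\<delta>^2) * c0"
    and n3: "n \<ge> 3"
    and hnorm: "\<forall>i\<in>{1..n}. norm (Y i) \<le> sqrt d + sqrt (2 * ln (real n) / c1)"
    and hbox: "sqrt d + sqrt (2 * ln (real n) / c1) \<le> real n"
    and hgrid: "\<forall>x\<in>gx n. \<forall>\<sigma>\<in>gs \<delta> n. \<bar>(\<Sum>j\<in>{1..n}. gauss_kernel \<sigma> x (Y j)) / real n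
                  - integral\<^sup>L \<mu> (gauss_kernel \<sigma> x)\<bar> < sqrt (a * ln (real n) / real n)"
    and herr: "2 * (2/\<delta>^2 + d/\<delta> + d^2/\<delta>^2) / real n \<le> sqrt (a * ln (real n) / real n)"
    and hsmall: "4 * sqrt (a * ln (real n) / real n) \<le> (c0 * exp (-2 * d/\<delta>^2)) * real n powr (-(4/(c1*\<delta>^2)))"
  shows "\<forall>\<sigma>\<in>{\<delta>..sqrt (real n)}. \<forall>i\<in>{1..n}.
           \<bar>ln ((1 / real n) * (\<Sum>j=1..n. gauss_kernel \<sigma> (Y i) (Y j)))
            - ln (integral\<^sup>L \<mu> (gauss_kernel \<sigma> (Y i)))\<bar>
           \<le> (4 * sqrt a / (c0 * exp (-2 * d/\<delta>^2))) * (real n powr (4/(c1*\<delta>^2) - 1/2) * sqrt (ln (real n)))"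
proof (intro ballI)
  fix \<sigma> i assume \<sigma>: "\<sigma> \<in> {\<delta>..sqrt (real n)}" and i: "i \<in> {1..n}"
  define s where "s = sqrt (a * ln (real n) / real n)"
  define \<alpha> where "\<alpha> = 4/(c1*\<delta>^2)"
  define cc where "cc = c0 * exp (-2 * d/\<delta>^2)"
  define x where "x = Y i"
  define E where "E \<tau> z = (1 / real n) * (\<Sum>j=1..n. gauss_kernel \<tau> z (Y j))" for \<tau> z
  define G where "G \<tau> z = integral\<^sup>L \<mu> (gauss_kernel \<tau> z)" for \<tau> z
  have np: "real n > 0" "real n \<ge> 1" "n > 0" "n \<ge> 1" using n3 by auto
  have l0: "ln (real n) \<ge> 0" using np by simp
  have d0: "d \<ge> 0" "a \<ge> 0" using d_def a_def by auto
  have s0: "s \<ge> 0" unfolding s_def using d0 l0 np by simp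
  have ccp: "cc > 0" unfolding cc_def using c0p by simp
  have \<sigma>1: "\<delta> \<le> \<sigma>" "\<sigma> \<le> sqrt (real n)" using \<sigma> by auto
  have sqn: "sqrt (real n) \<le> real n"
  proof -
    have "sqrt (real n) \<le> sqrt (real n ^ 2)" using np by (intro real_sqrt_le_mono) (simp add: power2_eq_square)
    thus ?thesis using np by simp
  qed
  have hx: "norm x \<le> sqrt d + sqrt (2 * ln (real n) / c1)" using hnorm i unfolding x_def by auto
  obtain x' where x': "x' \<in> gx n" "norm (x - x') \<le> real CARD('d) / real n"
    using gx_cover[OF np(4), of x] hx hbox by auto
  obtain \<sigma>' where \<sigma>': "\<sigma>' \<in> gs \<delta> n" "\<delta> \<le> \<sigma>'" "\<sigma>' \<le> \<sigma>" "\<sigma> - \<sigma>' \<le> 1 / (real n)^2"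
    using gs_cover[OF np(4) \<sigma>1(1)] \<sigma>1 sqn dp by auto
  define P1 where "P1 = 2 / (real n * \<delta>^2)"
  define P2 where "P2 = d / (real n * \<delta>) + d^2 / (real n * \<delta>^2)"
  have es: "(\<sigma> + \<sigma>') * \<bar>\<sigma> - \<sigma>'\<bar> / \<delta>^2 \<le> P1"
  proof -
    have "(\<sigma> + \<sigma>') * \<bar>\<sigma> - \<sigma>'\<bar> \<le> (2 * real n) * (1 / (real n)^2)"
      using \<sigma>' \<sigma>1 sqn dp by (intro mult_mono) auto
    also have "\<dots> = 2 / real n" using np by (simp add: power2_eq_square)
    finally have "(\<sigma> + \<sigma>') * \<bar>\<sigma> - \<sigma>'\<bar> / \<delta>^2 \<le> (2 / real n) / \<delta>^2"
      using dp by (intro divide_right_mono) auto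
    thus ?thesis unfolding P1_def by simp
  qed
  have ex: "norm (x - x')/\<delta> + (norm (x - x'))^2/\<delta>^2 \<le> P2"
  proof -
    have h: "norm (x - x') \<le> d / real n" using x' d_def by simp
    have "(norm (x - x'))^2 \<le> (d / real n)^2" using h by (intro power_mono) auto
    also have "\<dots> = d^2 / (real n)^2" by (simp add: power_divide)
    also have "\<dots> \<le> d^2 / real n" using np
      by (intro divide_left_mono) (auto simp: power2_eq_square)
    finally have h2: "(norm (x - x'))^2 \<le> d^2 / real n" .
    have "norm (x - x')/\<delta> + (norm (x - x'))^2/\<delta>^2 \<le> (d / real n)/\<delta> + (d^2 / real n)/\<delta>^2"
      using h h2 dp by (intro add_mono divide_right_mono) auto
    thus ?thesis unfolding P2_def by simp
  qed
  have ex': "norm (x' - x)/\<delta> + (norm (x' - x))^2/\<delta>^2 \<le> P2"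
    using ex by (simp add: norm_minus_commute)
  have es': "(\<sigma>' + \<sigma>) * \<bar>\<sigma>' - \<sigma>\<bar> / \<delta>^2 \<le> P1"
    using es by (simp add: abs_minus_commute add.commute)
  have e1: "\<bar>E \<sigma> x - E \<sigma>' x\<bar> \<le> P1"
    unfolding E_def by (rule avg_diff_le[OF np(3)]) (rule order_trans[OF gauss_s_lip[OF dp \<sigma>1(1) \<sigma>'(2)] es])
  have e2: "\<bar>E \<sigma>' x - E \<sigma>' x'\<bar> \<le> P2"
    unfolding E_def by (rule avg_diff_le[OF np(3)]) (rule order_trans[OF gauss_x_lip[OF dp \<sigma>'(2)] ex])
  have e3: "\<bar>E \<sigma>' x' - G \<sigma>' x'\<bar> \<le> s"
    using hgrid x'(1) \<sigma>'(1) unfolding E_def G_def s_def by (force simp: less_imp_le)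
  have e4: "\<bar>G \<sigma>' x' - G \<sigma>' x\<bar> \<le> P2"
    unfolding G_def
    by (rule int_diff_le[OF mu_prob gauss_int gauss_int])
       (rule order_trans[OF gauss_x_lip[OF dp \<sigma>'(2), where x=x' and x'=x] ex'])
  have e5: "\<bar>G \<sigma>' x - G \<sigma> x\<bar> \<le> P1"
    unfolding G_def
    by (rule int_diff_le[OF mu_prob gauss_int gauss_int])
       (rule order_trans[OF gauss_s_lip[OF dp \<sigma>'(2) \<sigma>1(1)] es'])
  have "\<bar>E \<sigma> x - G \<sigma> x\<bar> \<le> s + 2 * (P1 + P2)" using e1 e2 e3 e4 e5 by (smt (verit))
  also have "2 * (P1 + P2) = 2 * (2/\<delta>^2 + d/\<delta> + d^2/\<delta>^2) / real n"
    unfolding P1_def P2_def using np dp by (simp add: field_simps)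
  also have "s + \<dots> \<le> 2 * s" using herr unfolding s_def by simp
  finally have AB: "\<bar>E \<sigma> x - G \<sigma> x\<bar> \<le> 2 * s" .
  have Bl: "G \<sigma> x \<ge> cc * real n powr (-\<alpha>)"
  proof -
    define t where "t = sqrt (2 * ln (real n) / c1)"
    have t2: "t^2 = 2 * ln (real n) / c1" unfolding t_def using l0 c1p by simp
    have d2: "(sqrt d)^2 = d" using d0 by simp
    have "(norm x)^2 \<le> (sqrt d + t)^2" using hx by (intro power_mono) (auto simp: t_def)
    also have "\<dots> \<le> 2 * (sqrt d)^2 + 2 * t^2"
      using zero_le_power2[of "sqrt d - t"] by (simp add: power2_sum power2_diff)
    also have "\<dots> = 2 * d + 4 * ln (real n) / c1" using t2 d2 by simp
    finally have nx: "(norm x)^2 \<le> 2 * d + 4 * ln (real n) / c1" .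
    have "(norm x)^2/\<delta>^2 \<le> (2 * d + 4 * ln (real n) / c1)/\<delta>^2"
      using nx dp by (intro divide_right_mono) auto
    also have "\<dots> = 2 * d/\<delta>^2 + \<alpha> * ln (real n)"
      unfolding \<alpha>_def using dp c1p by (simp add: field_simps)
    finally have q: "-(2 * d/\<delta>^2) + (-\<alpha>) * ln (real n) \<le> -((norm x)^2)/\<delta>^2" by simp
    have "cc * real n powr (-\<alpha>) = c0 * (exp (-(2 * d/\<delta>^2)) * exp ((-\<alpha>) * ln (real n)))"
      unfolding cc_def using np by (simp add: powr_def)
    also have "\<dots> = c0 * exp (-(2 * d/\<delta>^2) + (-\<alpha>) * ln (real n))" by (simp only: exp_add)
    also have "\<dots> \<le> c0 * exp (-((norm x)^2)/\<delta>^2)" using q c0p by (intro mult_left_mono) auto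
    also have "\<dots> \<le> G \<sigma> x" unfolding G_def using lowG[OF \<sigma>1(1), of x] by (simp add: mult.commute)
    finally show ?thesis .
  qed
  have sm: "4 * s \<le> cc * real n powr (-\<alpha>)" using hsmall unfolding s_def cc_def \<alpha>_def by simp
  have "E \<sigma> x > 0 \<and> \<bar>ln (E \<sigma> x) - ln (G \<sigma> x)\<bar> \<le> (4 * sqrt a/cc) * (real n powr (\<alpha> - 1/2) * sqrt (ln (real n)))"
    by (rule real_final[OF AB Bl sm ccp np(1) s_def d0(2) l0])
  thus "\<bar>ln ((1 / real n) * (\<Sum>j=1..n. gauss_kernel \<sigma> (Y i) (Y j)))
            - ln (integral\<^sup>L \<mu> (gauss_kernel \<sigma> (Y i)))\<bar>
           \<le> (4 * sqrt a / (c0 * exp (-2 * d/\<delta>^2))) * (real n powr (4/(c1*\<delta>^2) - 1/2) * sqrt (ln (real n)))"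
    unfolding E_def G_def x_def cc_def \<alpha>_def by simp
qed

lemma fixed_omega:
  fixes Y :: "nat \<Rightarrow> real ^ 'd" and \<delta> c1 c0 d a :: real
  assumes d_def: "d = real CARD('d)" and a_def: "a = real (2*CARD('d)+3)"
    and dp: "\<delta> > 0" and c1p: "c1 > 0" and c0p: "c0 > 0"
    and lowG: "\<And>\<sigma> x. \<delta> \<le> \<sigma> \<Longrightarrow> integral\<^sup>L \<mu> (gauss_kernel \<sigma> x) \<ge> exp (-((norm x)^2)/\<delta>^2) * c0"
    and al: "0 < 4/(c1*\<delta>^2)" "4/(c1*\<delta>^2) < 1/2"
    and ev1: "eventually (\<lambda>n. norm (Y n) < sqrt d + sqrt (2 * ln (real n) / c1)) sequentially"
    and ev2: "eventually (\<lambda>n. \<forall>x\<in>gx n. \<forall>\<sigma>\<in>gs \<delta> n. \<bar>(\<Sum>j\<in>{1..n}. gauss_kernel \<sigma> x (Y j)) / real n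
                  - integral\<^sup>L \<mu> (gauss_kernel \<sigma> x)\<bar> < sqrt (a * ln (real n) / real n)) sequentially"
  shows "\<exists>K. eventually (\<lambda>n. \<forall>\<sigma>\<in>{\<delta>..sqrt (real n)}. \<forall>i\<in>{1..n}.
           \<bar>ln ((1 / real n) * (\<Sum>j=1..n. gauss_kernel \<sigma> (Y i) (Y j)))
            - ln (integral\<^sup>L \<mu> (gauss_kernel \<sigma> (Y i)))\<bar>
           \<le> K * (real n powr (4/(c1*\<delta>^2) - 1/2) * sqrt (ln (real n)))) sequentially"
proof -
  obtain N1 where N1: "\<And>m. m \<ge> N1 \<Longrightarrow> norm (Y m) < sqrt d + sqrt (2 * ln (real m) / c1)"
    using ev1 by (auto simp: eventually_sequentially)
  define Mx where "Mx = (\<Sum>m<N1. norm (Y m))"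
  have Mx: "norm (Y m) \<le> Mx" if "m < N1" for m
    unfolding Mx_def by (rule member_le_sum) (use that in auto)
  define cc where "cc = c0 * exp (-2 * d/\<delta>^2)"
  have ccp: "cc > 0" unfolding cc_def using c0p by simp
  define Q where "Q = 2 * (2/\<delta>^2 + d/\<delta> + d^2/\<delta>^2)"
  have ap: "a > 0" unfolding a_def by simp
  have d0: "d \<ge> 0" unfolding d_def by simp
  show ?thesis
  proof (intro exI)
    show "eventually (\<lambda>n. \<forall>\<sigma>\<in>{\<delta>..sqrt (real n)}. \<forall>i\<in>{1..n}.
           \<bar>ln ((1 / real n) * (\<Sum>j=1..n. gauss_kernel \<sigma> (Y i) (Y j)))
            - ln (integral\<^sup>L \<mu> (gauss_kernel \<sigma> (Y i)))\<bar>
           \<le> (4 * sqrt a / (c0 * exp (-2 * d/\<delta>^2))) * (real n powr (4/(c1*\<delta>^2) - 1/2) * sqrt (ln (real n)))) sequentially"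
      using eventually_ge_at_top[of "max N1 3"] ev_box[OF c1p, of d] ev_M[OF c1p, of Mx]
        ev_err[OF ap, of Q] ev_small[OF ap ccp al] ev2
    proof eventually_elim
      case (elim n)
      have n3: "n \<ge> 3" using elim(1) by simp
      have hnorm: "\<forall>i\<in>{1..n}. norm (Y i) \<le> sqrt d + sqrt (2 * ln (real n) / c1)"
      proof
        fix i assume i: "i \<in> {1..n}"
        show "norm (Y i) \<le> sqrt d + sqrt (2 * ln (real n) / c1)"
        proof (cases "N1 \<le> i")
          case True
          have "ln (real i) \<le> ln (real n)" using i by simp
          hence "2 * ln (real i) / c1 \<le> 2 * ln (real n) / c1" using c1p by (simp add: divide_right_mono)
          hence "sqrt (2 * ln (real i) / c1) \<le> sqrt (2 * ln (real n) / c1)" by (rule real_sqrt_le_mono)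
          thus ?thesis using N1[OF True] by linarith
        next
          case False
          hence "norm (Y i) \<le> Mx" using Mx by simp
          also have "\<dots> \<le> sqrt (2 * ln (real n) / c1)" by (rule elim(3))
          also have "\<dots> \<le> sqrt d + sqrt (2 * ln (real n) / c1)" using d0 by simp
          finally show ?thesis .
        qed
      qed
      show ?case
        by (rule det_bound[OF d_def a_def dp c1p c0p lowG n3 hnorm elim(2) elim(6)
              elim(4)[unfolded Q_def] elim(5)[unfolded cc_def]])
    qed
  qed
qed

end

theorem lemma3p7:
  fixes \<nu> :: "real measure" and M :: "'a measure"
    and X :: "nat \<Rightarrow> 'a \<Rightarrow> real ^ 'd"
    and c\<^sub>1 C \<delta> :: real
  assumes nu_prob: "prob_space \<nu>" and nu_sets: "sets \<nu> = sets borel"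
    and nu_sg: "subgaussian \<nu>"
    and c1_pos: "c\<^sub>1 > 0" and C_pos: "C > 0"
    and conc: "\<forall>t\<ge>0. measure (iid_vec_law \<nu> :: (real ^ 'd) measure)
                  {x\<in>space (iid_vec_law \<nu>). norm x \<ge> sqrt (real CARD('d)) + t}
                \<le> C * exp (- c\<^sub>1 * t^2)"
    and M_prob: "prob_space M"
    and X_meas: "\<forall>i. X i \<in> borel_measurable M"
    and X_indep: "prob_space.indep_vars M (\<lambda>_. borel) X UNIV"
    and X_law: "\<forall>i. distr M borel (X i) = iid_vec_law \<nu>"
    and delta_pos: "\<delta> > 0" and delta_big: "c\<^sub>1 * \<delta>^2 > 8"
  shows "AE \<omega> in M. \<exists>K. \<forall>\<^sub>F n in sequentially.
           (\<forall>\<sigma>\<in>{\<delta>..sqrt (real n)}. \<forall>i\<in>{1..n}.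
              \<bar>ln ((1 / real n) * (\<Sum>j=1..n. gauss_kernel \<sigma> (X i \<omega>) (X j \<omega>)))
               - ln (integral\<^sup>L (iid_vec_law \<nu>) (\<lambda>x'. gauss_kernel \<sigma> (X i \<omega>) x'))\<bar>
              \<le> K * (real n powr (4 / (c\<^sub>1 * \<delta>^2) - 1/2) * sqrt (ln (real n))))"
proof -
  interpret K: kde_setup M X "iid_vec_law \<nu>"
  proof (rule kde_setup.intro)
    show "prob_space M" by (rule M_prob)
    show "X i \<in> borel_measurable M" for i using X_meas by blast
    show "prob_space.indep_vars M (\<lambda>_. borel) X UNIV" by (rule X_indep)
    show "distr M borel (X i) = iid_vec_law \<nu>" for i using X_law by blast
  qed
  interpret P: prob_space "iid_vec_law \<nu> :: (real ^ 'd) measure" by (rule K.mu_prob)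
  define \<mu> where "\<mu> = (iid_vec_law \<nu> :: (real ^ 'd) measure)"
  define \<alpha> where "\<alpha> = 4 / (c\<^sub>1 * \<delta>^2)"
  define h where "h y = exp (-((norm y)^2)/\<delta>^2)" for y :: "real ^ 'd"
  define c0 where "c0 = integral\<^sup>L \<mu> h"
  have hm: "h \<in> borel_measurable \<mu>"
  proof -
    have hb: "h \<in> borel_measurable borel" unfolding h_def by measurable
    have e: "borel_measurable (iid_vec_law \<nu> :: (real^'d) measure) = borel_measurable borel"
      by (rule measurable_cong_sets[OF K.sets_mu refl])
    show ?thesis unfolding \<mu>_def e by (rule hb)
  qed
  have hint: "integrable \<mu> h"
    unfolding \<mu>_def by (rule P.integrable_const_bound[where B=1]) (use hm in \<open>auto simp: h_def \<mu>_def\<close>)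
  have c0p: "c0 > 0"
  proof -
    have "c0 \<ge> 0" unfolding c0_def by (rule Bochner_Integration.integral_nonneg) (simp add: h_def)
    moreover have "c0 \<noteq> 0"
    proof
      assume "c0 = 0"
      moreover have "AE y in \<mu>. 0 \<le> h y" by (simp add: h_def)
      ultimately have "AE y in \<mu>. h y = 0" unfolding c0_def
        using integral_nonneg_eq_0_iff_AE[OF hint] by blast
      hence "AE y in \<mu>. False" by (rule eventually_mono) (simp add: h_def)
      thus False unfolding \<mu>_def by simp
    qed
    ultimately show ?thesis by simp
  qed
  have lowG: "integral\<^sup>L \<mu> (gauss_kernel \<sigma> x) \<ge> exp (-((norm x)^2)/\<delta>^2) * c0" if "\<delta> \<le> \<sigma>" for \<sigma> x
  proof -
    have "exp (-((norm x)^2)/\<delta>^2) * c0 = integral\<^sup>L \<mu> (\<lambda>y. exp (-((norm x)^2)/\<delta>^2) * h y)"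
      unfolding c0_def by simp
    also have "\<dots> \<le> integral\<^sup>L \<mu> (gauss_kernel \<sigma> x)"
    proof (rule integral_mono)
      show "integrable \<mu> (\<lambda>y. exp (-((norm x)^2)/\<delta>^2) * h y)" using hint by simp
      show "integrable \<mu> (gauss_kernel \<sigma> x)" unfolding \<mu>_def by (rule K.gauss_int)
      show "exp (-((norm x)^2)/\<delta>^2) * h y \<le> gauss_kernel \<sigma> x y" for y
        unfolding h_def by (rule gauss_lower[OF delta_pos that])
    qed
    finally show ?thesis .
  qed
  have alpha: "0 < \<alpha>" "\<alpha> < 1/2" unfolding \<alpha>_def using delta_big c1_pos delta_pos by (auto simp: field_simps)
  have ev1: "AE \<omega> in M. eventually (\<lambda>n. norm (X n \<omega>) < sqrt (real CARD('d)) + sqrt (2 * ln (real n) / c\<^sub>1)) sequentially"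
    by (rule K.norm_ev[OF c1_pos conc])
  note ev2 = K.grid_ev[of \<delta>]
  have lowG': "\<And>\<sigma> (x :: real ^ 'd). \<delta> \<le> \<sigma> \<Longrightarrow> integral\<^sup>L (iid_vec_law \<nu>) (gauss_kernel \<sigma> x) \<ge> exp (-((norm x)^2)/\<delta>^2) * c0"
    using lowG unfolding \<mu>_def by blast
  have alpha': "0 < 4/(c\<^sub>1*\<delta>^2)" "4/(c\<^sub>1*\<delta>^2) < 1/2" using alpha unfolding \<alpha>_def by auto
  show ?thesis
    using eventually_conj[OF ev1 ev2]
    apply (rule eventually_mono)
    apply (elim conjE)
    apply (rule K.fixed_omega[OF refl refl delta_pos c1_pos c0p lowG' alpha'])
     apply assumption+
    done
qed

end
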